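(* Let $(X,\mathcal{T})$ be an anti-topological space with $|X|>3$. Then $(X,\mathcal{T})$ is not a door anti-topological space.
   Context: Let $X$ be a non-empty set. A family $\mathcal{T}\subseteq P(X)$ is an anti-topology on $X$ (and $(X,\mathcal{T})$ is an anti-topological space) if: (i) $\emptyset\notin\mathcal{T}$ and $X\notin\mathcal{T}$; (ii) for every $n\in\mathbb{N}$ and all $A_1,\dots,A_n\in\mathcal{T}$ that are not all equal, $\bigcap_{i=1}^n A_i\notin\mathcal{T}$; (iii) for every non-empty index set $J$ and all sets $A_i\in\mathcal{T}$ ($i\in J$) that are not all equal, $\bigcup_{i\in J}A_i\notin\mathcal{T}$. Elements of $\mathcal{T}$ are called anti-open; a set is anti-closed if its complement is anti-open. $(X,\mathcal{T})$ is a door anti-topological space if every subset $A\subseteq X$ with $A\neq\emptyset$ and $A\neq X$ is anti-open or anti-closed. *)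

theory Defs
  imports Main
begin

text \<open>The index set in (iii) is taken of type 'a set set; any indexed family can be reindexed
  by its own image, so this loses no generality.\<close>

definition anti_topology :: "'a set \<Rightarrow> 'a set set \<Rightarrow> bool" where
  "anti_topology X T \<longleftrightarrow>
     X \<noteq> {} \<and> T \<subseteq> Pow X \<and>
     {} \<notin> T \<and> X \<notin> T \<and>
     (\<forall>(n::nat) (A::nat \<Rightarrow> 'a set). n \<ge> 1 \<longrightarrow> (\<forall>i<n. A i \<in> T) \<longrightarrow>
        (\<exists>i<n. \<exists>j<n. A i \<noteq> A j) \<longrightarrow> (\<Inter>i<n. A i) \<notin> T) \<and>
     (\<forall>(J::'a set set) (A::'a set \<Rightarrow> 'a set). J \<noteq> {} \<longrightarrow> (\<forall>i\<in>J. A i \<in> T) \<longrightarrow>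
        (\<exists>i\<in>J. \<exists>j\<in>J. A i \<noteq> A j) \<longrightarrow> (\<Union>i\<in>J. A i) \<notin> T)"

definition anti_open :: "'a set set \<Rightarrow> 'a set \<Rightarrow> bool" where
  "anti_open T A \<longleftrightarrow> A \<in> T"

definition anti_closed :: "'a set \<Rightarrow> 'a set set \<Rightarrow> 'a set \<Rightarrow> bool" where
  "anti_closed X T A \<longleftrightarrow> A \<subseteq> X \<and> (X - A) \<in> T"

definition door_anti_topology :: "'a set \<Rightarrow> 'a set set \<Rightarrow> bool" where
  "door_anti_topology X T \<longleftrightarrow> anti_topology X T \<and>
     (\<forall>A. A \<subseteq> X \<longrightarrow> A \<noteq> {} \<longrightarrow> A \<noteq> X \<longrightarrow> anti_open T A \<or> anti_closed X T A)"

end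

theory Submission
  imports Defs
begin

lemma nest_open:
  assumes "anti_topology X T" "A \<in> T" "B \<in> T" "A \<subset> B"
  shows False
proof -
  define F where "F = (\<lambda>i::nat. if i = 0 then A else B)"
  have H: "\<forall>(n::nat) (A::nat \<Rightarrow> 'a set). n \<ge> 1 \<longrightarrow> (\<forall>i<n. A i \<in> T) \<longrightarrow>
        (\<exists>i<n. \<exists>j<n. A i \<noteq> A j) \<longrightarrow> (\<Inter>i<n. A i) \<notin> T"
    using assms(1) unfolding anti_topology_def by blast
  have 1: "\<forall>i<2. F i \<in> T" using assms by (simp add: F_def)
  have 2: "\<exists>i<2. \<exists>j<2. F i \<noteq> F j"
    using assms(4) by (intro exI[of _ 0] exI[of _ 1]) (auto simp: F_def)
  have "(\<Inter>i<2. F i) \<notin> T" using H 1 2 by (meson one_le_numeral)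
  moreover have "{..<2::nat} = {0,1}" by auto
  hence "(\<Inter>i<2. F i) = A" using assms(4) by (auto simp: F_def)
  ultimately show False using assms(2) by simp
qed

lemma small: "X \<subseteq> {a,b,c} \<Longrightarrow> finite X \<and> card X \<le> 3"
proof -
  assume h: "X \<subseteq> {a,b,c}"
  have "card {a,b,c} \<le> 3" by (simp add: card_insert_if)
  thus ?thesis using h by (meson card_mono finite.emptyI finite.insertI finite_subset le_trans)
qed

theorem mainTheorem15:
  fixes X :: "'a set" and T :: "'a set set"
  assumes "anti_topology X T"
    and "infinite X \<or> card X > 3"
  shows "\<not> door_anti_topology X T"
proof
  assume D: "door_anti_topology X T"
  have TX: "T \<subseteq> Pow X" using assms(1) unfolding anti_topology_def by auto
  have ne: "X - {a,b,c} \<noteq> {}" for a b c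
  proof
    assume "X - {a,b,c} = {}"
    hence "X \<subseteq> {a,b,c}" by blast
    from small[OF this] assms(2) show False by linarith
  qed
  obtain a where a: "a \<in> X" using ne by blast
  obtain b where b: "b \<in> X" "b \<noteq> a" using ne[of a a a] by blast
  obtain c where c: "c \<in> X" "c \<noteq> a" "c \<noteq> b" using ne[of a b b] by blast
  obtain d where d: "d \<in> X" "d \<noteq> a" "d \<noteq> b" "d \<noteq> c" using ne[of a b c] by blast
  let ?S1 = "{a}" and ?S2 = "{a,b}" and ?S3 = "{a,b,c}"
  have oc: "\<And>S. S \<subseteq> X \<Longrightarrow> S \<noteq> {} \<Longrightarrow> d \<notin> S \<Longrightarrow> S \<in> T \<or> X - S \<in> T"
  proof -
    fix S assume S: "S \<subseteq> X" "S \<noteq> {}" "d \<notin> S"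
    have "S \<noteq> X" using S d by blast
    thus "S \<in> T \<or> X - S \<in> T"
      using D S unfolding door_anti_topology_def anti_open_def anti_closed_def by blast
  qed
  have o1: "?S1 \<in> T \<or> X - ?S1 \<in> T" by (rule oc) (use a b c d in auto)
  have o2: "?S2 \<in> T \<or> X - ?S2 \<in> T" by (rule oc) (use a b c d in auto)
  have o3: "?S3 \<in> T \<or> X - ?S3 \<in> T" by (rule oc) (use a b c d in auto)
  have s12: "?S1 \<subset> ?S2" "X - ?S2 \<subset> X - ?S1" using a b c d by auto
  have s23: "?S2 \<subset> ?S3" "X - ?S3 \<subset> X - ?S2" using a b c d by auto
  have s13: "?S1 \<subset> ?S3" "X - ?S3 \<subset> X - ?S1" using a b c d by auto
  note N = nest_open[OF assms(1)]
  show False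
  proof (cases "?S1 \<in> T")
    case True
    then show ?thesis
      using o2 o3 N[OF True _ s12(1)] N[OF True _ s13(1)] N[OF _ _ s23(2)] by blast
  next
    case False
    then have C1: "X - ?S1 \<in> T" using o1 by blast
    then show ?thesis
      using o2 o3 N[OF _ C1 s12(2)] N[OF _ C1 s13(2)] N[OF _ _ s23(1)] by blast
  qed
qed

end
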